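(* Let $p\ge 2$ and $K\ge 0$ be integers, let $\alpha\in(0,1)$, and let $B>0$ satisfy $\frac{p-1+K}{B^2}\le \alpha<1$. Let $N(l;0,I_p)=(2\pi)^{-p/2}\exp(-\|l\|^2/2)$ denote the standard $p$-dimensional Gaussian density. Then $$\int_{\{\|l\|>B\}} N(l;0,I_p)\,\|l\|^K\,\mathrm{d}l \;\asymp\; \frac{B^{p-2+K}}{(p-2)!!}\,e^{-B^2/2},$$ i.e. the left-hand side is bounded above and below by the right-hand side multiplied by positive constants depending only on $\alpha$ (not on $p$ or $B$).
   Context: $\|\cdot\|$ is the Euclidean norm on $\mathbb{R}^p$; $m!!$ denotes the double factorial, with $0!!=1$. *)

theory Defs
  imports "HOL-Analysis.Analysis"
begin

fun dfact :: "nat \<Rightarrow> nat" where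
  "dfact 0 = 1"
| "dfact (Suc 0) = 1"
| "dfact (Suc (Suc n)) = Suc (Suc n) * dfact n"

text \<open>Points of R^p are represented as functions nat => real on the index set {..<p},
  with Lebesgue measure given by the product measure PiM {..<p} (\<lambda>_. lborel).\<close>
definition enorm :: "nat \<Rightarrow> (nat \<Rightarrow> real) \<Rightarrow> real" where
  "enorm p l = sqrt (\<Sum>i<p. (l i)\<^sup>2)"

definition std_gauss :: "nat \<Rightarrow> (nat \<Rightarrow> real) \<Rightarrow> real" where
  "std_gauss p l = (2 * pi) powr (- real p / 2) * exp (- (enorm p l)\<^sup>2 / 2)"

end

theory Submission
  imports Defs
begin

abbreviation "MM p \<equiv> PiM {..<p} (\<lambda>_::nat. (lborel::real measure))"

lemma enorm_meas[measurable]: "enorm p \<in> borel_measurable (MM p)"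
  unfolding enorm_def by measurable

lemma ball_meas:
  assumes "r > 0"
  shows "emeasure (MM p) {l\<in>space (MM p). enorm p l \<le> r} = ennreal (unit_ball_vol (real p) * r ^ p)"
proof -
  have "{l\<in>space (MM p). enorm p l \<le> r} = {f. sqrt (\<Sum>i\<in>{..<p}. (f i)\<^sup>2) \<le> r} \<inter> space (MM p)"
    by (auto simp: enorm_def)
  thus ?thesis using emeasure_cball_aux[of "{..<p}" r] assms by simp
qed

lemma zero_meas:
  assumes "p \<ge> 1"
  shows "emeasure (MM p) {l\<in>space (MM p). enorm p l \<le> 0} = 0"
proof -
  let ?x = "emeasure (MM p) {l\<in>space (MM p). enorm p l \<le> 0}"
  have le: "?x \<le> ennreal (unit_ball_vol (real p) * e ^ p)" if "e > 0" for e
  proof -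
    have "?x \<le> emeasure (MM p) {l\<in>space (MM p). enorm p l \<le> e}"
      by (rule emeasure_mono) (use that in auto)
    thus ?thesis using ball_meas[OF that] by simp
  qed
  have lim: "((\<lambda>e. ennreal (unit_ball_vol (real p) * e ^ p)) \<longlongrightarrow> ennreal (unit_ball_vol (real p) * 0 ^ p)) (at_right 0)"
    by (intro tendsto_intros tendsto_ennrealI) 
  have lim0: "((\<lambda>e. ennreal (unit_ball_vol (real p) * e ^ p)) \<longlongrightarrow> 0) (at_right 0)"
    using lim assms by (simp add: power_0_left)
  have ev: "eventually (\<lambda>e. ?x \<le> ennreal (unit_ball_vol (real p) * e ^ p)) (at_right (0::real))"
    by (rule eventually_at_rightI[of 0 1]) (auto intro: le)
  have "?x \<le> 0"
    by (rule tendsto_le[OF _ lim0 tendsto_const ev]) simp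
  thus ?thesis by simp
qed

definition rdens :: "nat \<Rightarrow> real \<Rightarrow> real" where
  "rdens p r = indicator {0..} r * (real p * unit_ball_vol (real p) * r ^ (p - 1))"

lemma rdens_meas[measurable]: "rdens p \<in> borel_measurable borel"
  unfolding rdens_def by measurable

lemma density_atMost:
  assumes "p \<ge> 1"
  shows "emeasure (density lborel (\<lambda>r. ennreal (rdens p r))) {..a} =
         (if a \<le> 0 then 0 else ennreal (unit_ball_vol (real p) * a ^ p))"
proof -
  have "emeasure (density lborel (\<lambda>r. ennreal (rdens p r))) {..a} =
        (\<integral>\<^sup>+ r. ennreal (rdens p r) * indicator {..a} r \<partial>lborel)"
    by (subst emeasure_density) auto
  also have "\<dots> = (\<integral>\<^sup>+ r. ennreal (real p * unit_ball_vol (real p) * r ^ (p - 1)) * indicator {0..a} r \<partial>lborel)"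
    by (intro nn_integral_cong) (auto simp: rdens_def indicator_def)
  also have "\<dots> = (if a \<le> 0 then 0 else ennreal (unit_ball_vol (real p) * a ^ p))"
  proof (cases "a \<le> 0")
    case True
    have "(\<integral>\<^sup>+ r. ennreal (real p * unit_ball_vol (real p) * r ^ (p - 1)) * indicator {0..a} r \<partial>lborel)
       = (\<integral>\<^sup>+ (r::real). 0 \<partial>lborel)"
      apply (rule nn_integral_cong_AE)
      using AE_lborel_singleton[of "0::real"] apply eventually_elim
      using True apply (auto simp: indicator_def)
      done
    then show ?thesis using True by simp
  next
    case False
    have "(\<integral>\<^sup>+ r. ennreal (real p * unit_ball_vol (real p) * r ^ (p - 1)) * indicator {0..a} r \<partial>lborel)
       = ennreal (unit_ball_vol (real p) * a ^ p - unit_ball_vol (real p) * 0 ^ p)"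
    proof (rule nn_integral_FTC_Icc)
      fix x :: real assume "x \<in> {0..a}"
      show "((\<lambda>r. unit_ball_vol (real p) * r ^ p) has_real_derivative (real p * unit_ball_vol (real p) * x ^ (p - 1))) (at x)"
        by (auto intro!: derivative_eq_intros)
      show "0 \<le> real p * unit_ball_vol (real p) * x ^ (p - 1)" using \<open>x \<in> {0..a}\<close> by auto
    qed (use False in auto)
    then show ?thesis using False assms by (simp add: power_0_left)
  qed
  finally show ?thesis .
qed

lemma distr_enorm:
  assumes "p \<ge> 1"
  shows "distr (MM p) borel (enorm p) = density lborel (\<lambda>r. ennreal (rdens p r))"
proof (rule measure_eqI_generator_eq_countable[where E = "range atMost" and \<Omega> = UNIV and A = "range (\<lambda>n::nat. {..real n})"])
  show "Int_stable (range atMost :: real set set)"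
    by (auto simp: Int_stable_def)
  show "range atMost \<subseteq> Pow (UNIV :: real set)" by auto
  show "sets (distr (MM p) borel (enorm p)) = sigma_sets UNIV (range atMost)"
    by (subst sets_distr sets_density sets_lborel, subst borel_eq_atMost[where 'a=real], simp)
  show "sets (density lborel (\<lambda>r. ennreal (rdens p r))) = sigma_sets UNIV (range atMost)"
    by (simp only: sets_density sets_lborel, subst borel_eq_atMost[where 'a=real], simp)
  show "range (\<lambda>n::nat. {..real n}) \<subseteq> range atMost" by auto
  show "\<Union> (range (\<lambda>n::nat. {..real n})) = UNIV"
    by (auto intro: real_arch_simple)
  show "countable (range (\<lambda>n::nat. {..real n}))" by auto
  have eq: "emeasure (distr (MM p) borel (enorm p)) {..a} =
         (if a \<le> 0 then 0 else ennreal (unit_ball_vol (real p) * a ^ p))" for a :: real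
  proof -
    have "emeasure (distr (MM p) borel (enorm p)) {..a} = emeasure (MM p) {l\<in>space (MM p). enorm p l \<le> a}"
      by (subst emeasure_distr) (auto intro!: arg_cong[where f="emeasure (MM p)"])
    also have "\<dots> = (if a \<le> 0 then 0 else ennreal (unit_ball_vol (real p) * a ^ p))"
    proof (cases "a \<le> 0")
      case True
      have "emeasure (MM p) {l\<in>space (MM p). enorm p l \<le> a} \<le> emeasure (MM p) {l\<in>space (MM p). enorm p l \<le> 0}"
        by (rule emeasure_mono) (use True in auto)
      then show ?thesis using True zero_meas[OF assms] by simp
    next
      case False then show ?thesis using ball_meas[of a p] by simp
    qed
    finally show ?thesis .
  qed
  show "emeasure (distr (MM p) borel (enorm p)) X = emeasure (density lborel (\<lambda>r. ennreal (rdens p r))) X"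
    if "X \<in> range atMost" for X
    using that eq density_atMost[OF assms] by auto
  show "emeasure (distr (MM p) borel (enorm p)) a \<noteq> \<infinity>" if "a \<in> range (\<lambda>n::nat. {..real n})" for a
    using that eq by (auto split: if_splits)
qed

lemma lim_pow_exp: "((\<lambda>r::real. r ^ n * exp (- r\<^sup>2 / 2)) \<longlongrightarrow> 0) at_top"
proof -
  have ev1: "eventually (\<lambda>r::real. 0 \<le> r ^ n * exp (- r\<^sup>2 / 2)) at_top"
    using eventually_ge_at_top[of "0::real"] by eventually_elim auto
  have bound: "r ^ n * exp (- r\<^sup>2 / 2) \<le> exp (1/2) * (r ^ n / exp r)" if "r \<ge> 0" for r :: real
  proof -
    have "- r\<^sup>2 / 2 \<le> 1/2 - r" using sum_power2_ge_zero[of "r - 1" 0] by (simp add: power2_eq_square algebra_simps)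
    then have "exp (- r\<^sup>2 / 2) \<le> exp (1/2 - r)" by simp
    also have "\<dots> = exp (1/2) / exp r" by (simp add: exp_diff)
    finally have "r ^ n * exp (- r\<^sup>2 / 2) \<le> r ^ n * (exp (1/2) / exp r)"
      using that by (intro mult_left_mono) auto
    then show ?thesis by (simp add: ac_simps)
  qed
  have ev2: "eventually (\<lambda>r::real. r ^ n * exp (- r\<^sup>2 / 2) \<le> exp (1/2) * (r ^ n / exp r)) at_top"
    using eventually_ge_at_top[of "0::real"] by (rule eventually_mono) (rule bound)
  have lim: "((\<lambda>r::real. exp (1/2) * (r ^ n / exp r)) \<longlongrightarrow> 0) at_top"
    using tendsto_mult[OF tendsto_const tendsto_power_div_exp_0[of n], of "exp (1/2)"] by simp
  show ?thesis by (rule tendsto_sandwich[OF ev1 ev2 tendsto_const lim])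
qed

lemma tail_lower:
  assumes "B > 0"
  shows "ennreal (B ^ n * exp (- B\<^sup>2 / 2)) \<le> (\<integral>\<^sup>+ r. ennreal (r ^ (n+1) * exp (- r\<^sup>2 / 2)) * indicator {B..} r \<partial>lborel)"
proof -
  have eq: "(\<integral>\<^sup>+ r. ennreal (B ^ n * (r * exp (- r\<^sup>2 / 2))) * indicator {B..} r \<partial>lborel)
        = ennreal (0 - (- (B ^ n * exp (- B\<^sup>2 / 2))))"
  proof (rule nn_integral_FTC_atLeast[where F="\<lambda>r. - (B ^ n * exp (- r\<^sup>2 / 2))"])
    show "(\<lambda>r. B ^ n * (r * exp (- r\<^sup>2 / 2))) \<in> borel_measurable borel" by measurable
    fix x :: real assume "B \<le> x"
    show "((\<lambda>r. - (B ^ n * exp (- r\<^sup>2 / 2))) has_real_derivative B ^ n * (x * exp (- x\<^sup>2 / 2))) (at x)"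
      by (auto intro!: derivative_eq_intros simp: power2_eq_square)
    show "0 \<le> B ^ n * (x * exp (- x\<^sup>2 / 2))" using \<open>B \<le> x\<close> assms by auto
  next
    have "((\<lambda>r::real. exp (- r\<^sup>2 / 2)) \<longlongrightarrow> 0) at_top" using lim_pow_exp[of 0] by simp
    then show "((\<lambda>r. - (B ^ n * exp (- r\<^sup>2 / 2))) \<longlongrightarrow> 0) at_top"
      using tendsto_minus[OF tendsto_mult[OF tendsto_const[of "B^n"]]] by fastforce
  qed
  have le: "(\<integral>\<^sup>+ r. ennreal (B ^ n * (r * exp (- r\<^sup>2 / 2))) * indicator {B..} r \<partial>lborel) \<le> (\<integral>\<^sup>+ r. ennreal (r ^ (n+1) * exp (- r\<^sup>2 / 2)) * indicator {B..} r \<partial>lborel)"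
  proof (intro nn_integral_mono)
    fix r :: real
    show "ennreal (B ^ n * (r * exp (- r\<^sup>2 / 2))) * indicator {B..} r \<le> ennreal (r ^ (n+1) * exp (- r\<^sup>2 / 2)) * indicator {B..} r"
    proof (cases "B \<le> r")
      case True
      have "B ^ n \<le> r ^ n" using True assms by (intro power_mono) auto
      then have "B ^ n * r * exp (- r\<^sup>2 / 2) \<le> r ^ n * r * exp (- r\<^sup>2 / 2)"
        using True assms by (intro mult_right_mono) auto
      then show ?thesis using True by (auto simp: indicator_def mult.assoc mult.commute mult.left_commute intro!: ennreal_leI)
    qed (auto simp: indicator_def)
  qed
  show ?thesis using eq le by simp
qed

lemma tail_upper:
  assumes "B > 0" "0 < a" "a < 1" "real n \<le> a * B\<^sup>2"
  shows "(\<integral>\<^sup>+ r. ennreal (r ^ (n+1) * exp (- r\<^sup>2 / 2)) * indicator {B..} r \<partial>lborel) \<le> ennreal (B ^ n * exp (- B\<^sup>2 / 2) / (1 - a))"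
proof -
  define f where "f r = exp (- r\<^sup>2 / 2) * (r ^ (n+1) - real n * r ^ (n - 1)) / (1 - a)" for r :: real
  have key: "(1 - a) * r ^ (n+1) \<le> r ^ (n+1) - real n * r ^ (n - 1)" if "B \<le> r" for r
  proof (cases n)
    case 0 then show ?thesis using that assms by simp
  next
    case (Suc m)
    have "real n \<le> a * r\<^sup>2"
      using assms that by (smt (verit) mult_left_mono power_mono)
    then have "real n * r ^ m \<le> a * r\<^sup>2 * r ^ m" using that assms by (intro mult_right_mono) auto
    then show ?thesis using Suc by (simp add: power2_eq_square algebra_simps)
  qed
  have "(\<integral>\<^sup>+ r. ennreal (r ^ (n+1) * exp (- r\<^sup>2 / 2)) * indicator {B..} r \<partial>lborel)
      \<le> (\<integral>\<^sup>+ r. ennreal (f r) * indicator {B..} r \<partial>lborel)"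
  proof (intro nn_integral_mono)
    fix r :: real
    show "ennreal (r ^ (n+1) * exp (- r\<^sup>2 / 2)) * indicator {B..} r \<le> ennreal (f r) * indicator {B..} r"
    proof (cases "B \<le> r")
      case True
      have "(1 - a) * r ^ (n+1) * exp (- r\<^sup>2 / 2) \<le> (r ^ (n+1) - real n * r ^ (n - 1)) * exp (- r\<^sup>2 / 2)"
        using key[OF True] by (intro mult_right_mono) auto
      then have "r ^ (n+1) * exp (- r\<^sup>2 / 2) \<le> f r"
        using assms unfolding f_def by (simp add: field_simps)
      then show ?thesis using True by (auto simp: indicator_def intro: ennreal_leI)
    qed (auto simp: indicator_def)
  qed
  also have "\<dots> = ennreal (0 - (- (B ^ n * exp (- B\<^sup>2 / 2)) / (1 - a)))"
  proof (rule nn_integral_FTC_atLeast[where F="\<lambda>r. - (r ^ n * exp (- r\<^sup>2 / 2)) / (1 - a)"])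
    show "f \<in> borel_measurable borel" unfolding f_def by measurable
    fix x :: real assume "B \<le> x"
    have d1: "((\<lambda>r. r ^ n) has_real_derivative real n * x ^ (n - Suc 0)) (at x)" by (rule DERIV_pow)
    have d2: "((\<lambda>r. exp (- r\<^sup>2 / 2)) has_real_derivative exp (- x\<^sup>2 / 2) * (- x)) (at x)"
      by (auto intro!: derivative_eq_intros simp: power2_eq_square)
    have eqd: "- (real n * x ^ (n - Suc 0) * exp (- x\<^sup>2 / 2) + exp (- x\<^sup>2 / 2) * (- x) * x ^ n) =
               exp (- x\<^sup>2 / 2) * (x ^ (n+1) - real n * x ^ (n - 1))"
      by (cases n) (auto simp: algebra_simps)
    show "((\<lambda>r. - (r ^ n * exp (- r\<^sup>2 / 2)) / (1 - a)) has_real_derivative f x) (at x)"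
      unfolding f_def using DERIV_cdivide[OF DERIV_minus[OF DERIV_mult[OF d1 d2]], of "1 - a"] eqd by simp
    have "0 \<le> (1 - a) * x ^ (n+1)" using assms \<open>B \<le> x\<close> by auto
    then have "0 \<le> x ^ (n+1) - real n * x ^ (n - 1)" using key[OF \<open>B \<le> x\<close>] by linarith
    then show "0 \<le> f x" unfolding f_def using assms by auto
  next
    show "((\<lambda>r. - (r ^ n * exp (- r\<^sup>2 / 2)) / (1 - a)) \<longlongrightarrow> 0) at_top"
      using tendsto_divide[OF tendsto_minus[OF lim_pow_exp[of n]] tendsto_const[of "1 - a"]] assms by simp
  qed
  finally show ?thesis by simp
qed

definition Dc :: "nat \<Rightarrow> real" where
  "Dc p = real p * unit_ball_vol (real p) * (2 * pi) powr (- real p / 2) * real (dfact (p - 2))"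

lemma ubv_step: "unit_ball_vol (real q + 2) = unit_ball_vol (real q) * (2 * pi) / (real q + 2)"
proof -
  have z: "real q / 2 + 1 \<notin> \<int>\<^sub>\<le>\<^sub>0"
    by (auto simp: nonpos_Ints_def)
  have g: "Gamma ((real q + 2) / 2 + 1) = (real q / 2 + 1) * Gamma (real q / 2 + 1)"
    using Gamma_plus1[OF z] by (simp add: add_divide_distrib add.assoc)
  have pw: "pi powr ((real q + 2) / 2) = pi * pi powr (real q / 2)"
    by (simp add: add_divide_distrib powr_add)
  have "Gamma (real q / 2 + 1) > 0" by (intro Gamma_real_pos) auto
  then show ?thesis unfolding unit_ball_vol_def g pw by (simp add: field_simps)
qed

lemma Dc_step:
  assumes "q \<ge> 2"
  shows "Dc (q + 2) = Dc q"
proof -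
  have df: "dfact q = q * dfact (q - 2)"
    using assms by (cases q rule: dfact.cases) auto
  have pw: "(2 * pi) powr (- real (q + 2) / 2) = (2 * pi) powr (- real q / 2) / (2 * pi)"
  proof -
    have e: "- real (q + 2) / 2 = - real q / 2 + (-1)" by (simp add: field_simps)
    show ?thesis by (simp only: e powr_add) (simp add: powr_neg_one)
  qed
  have u: "unit_ball_vol (real (q + 2)) = unit_ball_vol (real q) * (2 * pi) / (real q + 2)"
    using ubv_step[of q] by (simp add: add.commute)
  have gen: "A * (U * T / A) * (P / T) * W = U * P * W" if "A > 0" "T > 0" for A U T P W :: real
    using that by (simp add: field_simps)
  have "Dc (q + 2) = (real q + 2) * (unit_ball_vol (real q) * (2 * pi) / (real q + 2)) *
          ((2 * pi) powr (- real q / 2) / (2 * pi)) * (real q * real (dfact (q - 2)))"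
  proof -
    have e1: "q + 2 - 2 = q" by simp
    have e2: "real (q + 2) = real q + 2" by simp
    have e3: "real (dfact q) = real q * real (dfact (q - 2))" using df by simp
    show ?thesis unfolding Dc_def u pw e1 by (simp only: e2 e3)
  qed
  also have "\<dots> = unit_ball_vol (real q) * (2 * pi) powr (- real q / 2) * (real q * real (dfact (q - 2)))"
    by (rule gen) (auto simp: pi_gt_zero)
  also have "\<dots> = Dc q" unfolding Dc_def by simp
  finally show ?thesis .
qed

lemma Dc_2: "Dc 2 = 1"
proof -
  have "unit_ball_vol (real 2) = pi" using unit_ball_vol_even[of 1] by simp
  then show ?thesis unfolding Dc_def by (simp add: powr_neg_one)
qed

lemma Dc_3: "Dc 3 = sqrt (2 / pi)"
proof -
  have u: "unit_ball_vol (real 3) = 4 * pi / 3"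
    using unit_ball_vol_odd'[of 1] by (simp add: pochhammer_Suc_prod numeral_3_eq_3)
  have "(2 * pi) powr (- real 3 / 2) = 1 / ((2 * pi) * sqrt (2 * pi))"
  proof -
    have "- real 3 / 2 = - 1 + (- 1/2 :: real)" by simp
    then have "(2 * pi) powr (- real 3 / 2) = (2 * pi) powr (-1) * (2 * pi) powr (-1/2)"
      by (simp only: powr_add)
    also have "(2 * pi) powr (-1/2) = 1 / sqrt (2 * pi)"
      by (simp add: powr_minus_divide powr_half_sqrt)
    finally show ?thesis by (simp add: powr_neg_one)
  qed
  then have "Dc 3 = 2 / sqrt (2 * pi)" unfolding Dc_def u by (simp add: numeral_3_eq_3 field_simps)
  also have "\<dots> = sqrt (2 / pi)"
  proof -
    have "sqrt (2 * pi) * sqrt (2 / pi) = 2" by (simp flip: real_sqrt_mult)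
    then show ?thesis by (simp add: field_simps)
  qed
  finally show ?thesis .
qed

lemma Dc_bounds:
  assumes "p \<ge> 2"
  shows "sqrt (2 / pi) \<le> Dc p \<and> Dc p \<le> 1"
  using assms
proof (induction p rule: less_induct)
  case (less p)
  have s1: "sqrt (2 / pi) \<le> 1" using pi_gt3 by simp
  show ?case
  proof (cases "p \<ge> 4")
    case True
    have "Dc (p - 2 + 2) = Dc (p - 2)" by (rule Dc_step) (use True in simp)
    moreover have "p - 2 + 2 = p" using True by simp
    ultimately have "Dc p = Dc (p - 2)" by simp
    then show ?thesis using less.IH[of "p - 2"] True by simp
  next
    case False
    then have "p = 2 \<or> p = 3" using less.prems by auto
    then show ?thesis using Dc_2 Dc_3 s1 by auto
  qed
qed

lemma rdens_nonneg: "0 \<le> rdens p r"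
  unfolding rdens_def by (auto simp: indicator_def)

lemma dfact_pos: "dfact n > 0"
  by (induction n rule: dfact.induct) auto

theorem lemma3:
  fixes \<alpha> :: real
  assumes "0 < \<alpha>" and "\<alpha> < 1"
  shows "\<exists>c1 c2. 0 < c1 \<and> 0 < c2 \<and>
    (\<forall>(p::nat) (K::nat) (B::real). 2 \<le> p \<and> 0 < B \<and> (real p - 1 + real K) / B\<^sup>2 \<le> \<alpha> \<longrightarrow>
      (let L = (\<integral>l. indicator {l. B < enorm p l} l * std_gauss p l * enorm p l ^ K
                   \<partial>(PiM {..<p} (\<lambda>_. lborel)));
           R = B ^ (p - 2 + K) / real (dfact (p - 2)) * exp (- B\<^sup>2 / 2)
       in c1 * R \<le> L \<and> L \<le> c2 * R))"
proof (intro exI conjI allI impI)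
  show "0 < sqrt (2 / pi)" by simp
  show "0 < 1 / (1 - \<alpha>)" using assms by simp
  fix p K :: nat and B :: real
  assume H: "2 \<le> p \<and> 0 < B \<and> (real p - 1 + real K) / B\<^sup>2 \<le> \<alpha>"
  then have p2: "2 \<le> p" and B0: "0 < B" and cond: "(real p - 1 + real K) / B\<^sup>2 \<le> \<alpha>" by auto
  define n where "n = p - 2 + K"
  have n1: "p - 1 + K = n + 1" using p2 unfolding n_def by simp
  have nle: "real n \<le> \<alpha> * B\<^sup>2"
  proof -
    have "real p - 1 + real K \<le> \<alpha> * B\<^sup>2" using cond B0 by (simp add: divide_le_eq)
    moreover have "real n \<le> real p - 1 + real K" using p2 unfolding n_def by simp
    ultimately show ?thesis by linarith
  qed
  define C where "C = (2 * pi) powr (- real p / 2)"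
  define g where "g r = indicator {B<..} r * (C * exp (- r\<^sup>2 / 2)) * r ^ K" for r :: real
  define P where "P = real p * unit_ball_vol (real p) * C"
  define Q where "Q = (\<integral>\<^sup>+ r. ennreal (r ^ (n+1) * exp (- r\<^sup>2 / 2)) * indicator {B..} r \<partial>lborel)"
  define lo where "lo = B ^ n * exp (- B\<^sup>2 / 2)"
  have P0: "0 \<le> P" unfolding P_def C_def by auto
  have g_nonneg: "0 \<le> g r" for r using B0 by (auto simp: g_def indicator_def C_def)
  have g_meas[measurable]: "g \<in> borel_measurable borel" unfolding g_def by measurable
  have Qlo: "ennreal lo \<le> Q" unfolding Q_def lo_def by (rule tail_lower[OF B0])
  have Qhi: "Q \<le> ennreal (lo / (1 - \<alpha>))" unfolding Q_def lo_def by (rule tail_upper[OF B0 assms nle])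
  define q where "q = enn2real Q"
  have Qtop: "Q < top" using Qhi by (rule le_less_trans) simp
  have q: "Q = ennreal q" "0 \<le> q" unfolding q_def using Qtop by auto
  have lo0: "0 \<le> lo" unfolding lo_def using B0 by simp
  have qlo: "lo \<le> q" using Qlo q by simp
  have qhi: "q \<le> lo / (1 - \<alpha>)" using Qhi q lo0 assms by simp
  let ?L = "\<integral>l. indicator {l. B < enorm p l} l * std_gauss p l * enorm p l ^ K \<partial>(PiM {..<p} (\<lambda>_. lborel))"
  have "?L = (\<integral>l. g (enorm p l) \<partial>MM p)"
    by (intro Bochner_Integration.integral_cong) (auto simp: g_def std_gauss_def C_def indicator_def)
  also have "\<dots> = (\<integral>r. g r \<partial>distr (MM p) borel (enorm p))"
    by (rule integral_distr[symmetric]) auto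
  also have "\<dots> = (\<integral>r. g r \<partial>density lborel (\<lambda>r. ennreal (rdens p r)))"
    using p2 by (subst distr_enorm) auto
  also have "\<dots> = (\<integral>r. rdens p r *\<^sub>R g r \<partial>lborel)"
    by (rule integral_density) (auto intro!: AE_I2 rdens_nonneg)
  also have "\<dots> = enn2real (\<integral>\<^sup>+ r. ennreal (rdens p r * g r) \<partial>lborel)"
    unfolding real_scaleR_def by (rule integral_eq_nn_integral) (auto intro!: AE_I2 mult_nonneg_nonneg rdens_nonneg g_nonneg)
  also have "(\<integral>\<^sup>+ r. ennreal (rdens p r * g r) \<partial>lborel) =
             (\<integral>\<^sup>+ r. ennreal P * (ennreal (r ^ (n+1) * exp (- r\<^sup>2 / 2)) * indicator {B..} r) \<partial>lborel)"
  proof (rule nn_integral_cong_AE)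
    show "AE r in lborel. ennreal (rdens p r * g r) = ennreal P * (ennreal (r ^ (n+1) * exp (- r\<^sup>2 / 2)) * indicator {B..} r)"
      using AE_lborel_singleton[of B]
    proof eventually_elim
      case (elim r)
      show ?case
      proof (cases "B < r")
        case True
        then have r0: "0 \<le> r" using B0 by simp
        have pw: "r ^ (p - 1) * r ^ K = r ^ (n+1)" unfolding n1[symmetric] by (simp add: power_add)
        have "rdens p r * g r = (real p * unit_ball_vol (real p) * C) * ((r ^ (p - 1) * r ^ K) * exp (- r\<^sup>2 / 2))"
          using True r0 by (simp add: rdens_def g_def indicator_def algebra_simps)
        then have "rdens p r * g r = P * (r ^ (n+1) * exp (- r\<^sup>2 / 2))"
          unfolding pw P_def .
        then show ?thesis using True P0 r0 by (simp add: ennreal_mult indicator_def)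
      next
        case False
        then show ?thesis using elim by (simp add: g_def indicator_def)
      qed
    qed
  qed
  also have "\<dots> = ennreal P * Q" unfolding Q_def by (rule nn_integral_cmult) auto
  finally have L: "?L = P * q" using q P0 by (simp add: ennreal_mult[symmetric])
  have dpos: "real (dfact (p - 2)) > 0" using dfact_pos by simp
  have PD: "P = Dc p / real (dfact (p - 2))" unfolding P_def C_def Dc_def using dpos by simp
  have R: "B ^ (p - 2 + K) / real (dfact (p - 2)) * exp (- B\<^sup>2 / 2) = lo / real (dfact (p - 2))"
    unfolding lo_def n_def by simp
  have Db: "sqrt (2 / pi) \<le> Dc p" "Dc p \<le> 1" using Dc_bounds[OF p2] by auto
  have "0 \<le> sqrt (2 / pi)" by simp
  then have Dnn: "0 \<le> Dc p" using Db(1) by linarith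
  have low: "sqrt (2 / pi) * lo \<le> Dc p * q"
    using Db(1) qlo lo0 Dnn by (intro mult_mono) auto
  have "Dc p * q \<le> 1 * (lo / (1 - \<alpha>))"
    using Db qhi q(2) Dnn by (intro mult_mono) auto
  then have high: "Dc p * q \<le> 1 / (1 - \<alpha>) * lo" by simp
  show "let L = ?L; R = B ^ (p - 2 + K) / real (dfact (p - 2)) * exp (- B\<^sup>2 / 2)
        in sqrt (2 / pi) * R \<le> L \<and> L \<le> 1 / (1 - \<alpha>) * R"
  proof -
    define d where "d = real (dfact (p - 2))"
    have e1: "sqrt (2/pi) * (lo / d) = (sqrt (2/pi) * lo) / d" by simp
    have e2: "Dc p / d * q = (Dc p * q) / d" by simp
    have e3: "1 / (1 - \<alpha>) * (lo / d) = (1 / (1 - \<alpha>) * lo) / d" by simp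
    have "(sqrt (2/pi) * lo) / d \<le> (Dc p * q) / d" using low dpos unfolding d_def by (intro divide_right_mono) auto
    moreover have "(Dc p * q) / d \<le> (1 / (1 - \<alpha>) * lo) / d" using high dpos unfolding d_def by (intro divide_right_mono) auto
    ultimately show ?thesis unfolding Let_def L R PD unfolding d_def[symmetric] e1 e2 e3 by simp
  qed
qed

end
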